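(* Assume the regularity conditions (C1) and (C2) below, let $\hat\Lambda$ be a given selection rule, and let $\hat{\boldsymbol\theta}$ be a coherent estimator of $\boldsymbol\theta$ (true support $\Lambda$) whose selective biases $\mathbf b_k(\boldsymbol\theta,\Lambda)$ are differentiable in $\boldsymbol\theta_\Lambda$. Then the MSSE satisfies $$\mathrm{E}_{\boldsymbol\theta_\Lambda}[\mathbf C(\hat{\boldsymbol\theta},\hat\Lambda,\boldsymbol\theta)]\succeq \mathbf B_{\mathrm{sCRB}}(\boldsymbol\theta_\Lambda):=\sum_{k=1}^K\pi_k(\boldsymbol\theta_\Lambda)\Big(\boldsymbol\Psi_k(\boldsymbol\theta,\Lambda)+\mathbf b_k(\boldsymbol\theta,\Lambda)\mathbf b_k^T(\boldsymbol\theta,\Lambda)\Big),$$ where $\boldsymbol\Psi_k(\boldsymbol\theta,\Lambda)=(\mathbf D_k(\Lambda)+\mathbf G_k(\boldsymbol\theta,\Lambda))\mathbf J_k^{-1}(\boldsymbol\theta_\Lambda)(\mathbf D_k(\Lambda)+\mathbf G_k(\boldsymbol\theta,\Lambda))^T$ (sum over $k$ with $\pi_k(\boldsymbol\theta_\Lambda)\neq0$). Furthermore, the MSE matrix satisfies $$\mathrm{MSE}(\hat{\boldsymbol\theta},\boldsymbol\theta,\Lambda)\succeq \mathbf B_{\mathrm{sCRB}}(\boldsymbol\theta_\Lambda)+\sum_{k=1}^K\pi_k(\boldsymbol\theta_\Lambda)\boldsymbol\theta^{\mathrm{ZP}}_{\Lambda_k^c}(\boldsymbol\theta^{\mathrm{ZP}}_{\Lambda_k^c})^T-\sum_{k=1}^K\pi_k(\boldsymbol\theta_\Lambda)\Big(\boldsymbol\theta^{\mathrm{ZP}}_{\Lambda_k^c}\mathbf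 b_k^T(\boldsymbol\theta,\Lambda)+\mathbf b_k(\boldsymbol\theta,\Lambda)(\boldsymbol\theta^{\mathrm{ZP}}_{\Lambda_k^c})^T\Big).$$ In particular, if $\mathbf b_k\equiv\mathbf 0$ for all $k$, then $\mathbf B_{\mathrm{sCRB}}(\boldsymbol\theta_\Lambda)=\sum_{k=1}^K\pi_k(\boldsymbol\theta_\Lambda)\mathbf D_k(\Lambda)\mathbf J_k^{-1}(\boldsymbol\theta_\Lambda)\mathbf D_k^T(\Lambda)$.
   Context: Setting (estimation after model selection). $\boldsymbol\theta\in\mathbb{R}^M$ is an unknown deterministic vector. A finite family of nonempty candidate support sets $\Lambda_1,\dots,\Lambda_K\subseteq\{1,\dots,M\}$ is known; the true support $\Lambda$ is one of them, $\boldsymbol\theta_{\Lambda^c}=\mathbf 0$. $\boldsymbol\theta_S$ is the subvector indexed by $S$; $[\Lambda]_l$ denotes the $l$-th element of $\Lambda$ (in increasing order). The observation $\mathbf x\in\Omega_{\mathbf x}$ has pdf $f(\mathbf x;\boldsymbol\theta_\Lambda)$; $\mathrm{E}_{\boldsymbol\theta_\Lambda}$ is expectation under it. A selection rule is a deterministic measurable $\hat\Lambda:\Omega_{\mathbf x}\to\{\Lambda_1,\dots,\Lambda_K\}$; $\mathcal A_k=\{\mathbf x:\hat\Lambda(\mathbf x)=\Lambda_k\}$, $\pi_k(\boldsymbol\theta_\Lambda)=\Pr(\hat\Lambda=\Lambda_k;\boldsymbol\theta_\Lambda)$, and for $\pi_k\ne0$, $f(\mathbf x\mid\hat\Lambda=\Lambda_k;\boldsymbol\theta_\Lambda)=f(\mathbf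 x;\boldsymbol\theta_\Lambda)/\pi_k(\boldsymbol\theta_\Lambda)$ for $\mathbf x\in\mathcal A_k$. Zero-padding: $\mathbf a^{\mathrm{ZP}}_S\in\mathbb{R}^M$ has entry $a_m$ if $m\in S$, else $0$. Estimators $\hat{\boldsymbol\theta}:\Omega_{\mathbf x}\to\mathbb{R}^M$ have finite second moments; coherent means $\hat\theta_m(\mathbf x)=0$ whenever $m\notin\hat\Lambda(\mathbf x)$. SSE cost $\mathbf C(\hat{\boldsymbol\theta},\hat\Lambda,\boldsymbol\theta)=(\hat{\boldsymbol\theta}^{\mathrm{ZP}}_{\hat\Lambda}-\boldsymbol\theta^{\mathrm{ZP}}_{\hat\Lambda})(\hat{\boldsymbol\theta}^{\mathrm{ZP}}_{\hat\Lambda}-\boldsymbol\theta^{\mathrm{ZP}}_{\hat\Lambda})^T$; MSSE is its expectation; $\mathrm{MSE}(\hat{\boldsymbol\theta},\boldsymbol\theta,\Lambda)=\mathrm{E}_{\boldsymbol\theta_\Lambda}[(\hat{\boldsymbol\theta}-\boldsymbol\theta)(\hat{\boldsymbol\theta}-\boldsymbol\theta)^T]$. Selective bias $\mathbf b_k(\boldsymbol\theta,\Lambda)=\mathrm{E}_{\boldsymbol\theta_\Lambda}[\hat{\boldsymbol\theta}^{\mathrm{ZP}}_{\Lambda_k}-\boldsymbol\theta^{\mathrm{ZP}}_{\Lambda_k}\mid\hat\Lambda=\Lambda_k]$; $\mathbf G_k(\boldsymbol\theta,\Lambda)=\nabla_{\boldsymbol\theta_\Lambda}\mathbf b_k(\boldsymbol\theta,\Lambda)\in\mathbb{R}^{M\times|\Lambda|}$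 (entry $(m,l)$ is $\partial[\mathbf b_k]_m/\partial[\boldsymbol\theta_\Lambda]_l$). Post-model-selection score: $\boldsymbol\upsilon_k(\mathbf x,\boldsymbol\theta_\Lambda)=\nabla^T_{\boldsymbol\theta_\Lambda}\log f(\mathbf x\mid\hat\Lambda=\Lambda_k;\boldsymbol\theta_\Lambda)$ for $\mathbf x\in\mathcal A_k$ (a $|\Lambda|$-dimensional column vector). Selective FIM: $\mathbf J_k(\boldsymbol\theta_\Lambda)=\mathrm{E}_{\boldsymbol\theta_\Lambda}[\boldsymbol\upsilon_k\boldsymbol\upsilon_k^T\mid\hat\Lambda=\Lambda_k]$. $\mathbf D_k(\Lambda)$ is the $M\times|\Lambda|$ 0-1 matrix with $[\mathbf D_k(\Lambda)]_{m,l}=1$ if $m\in\Lambda_k$ and $m=[\Lambda]_l$, and $0$ otherwise. Regularity: (C1) the vectors $\boldsymbol\upsilon_k$ exist and the matrices $\mathbf J_k(\boldsymbol\theta_\Lambda)$ are well defined and nonsingular for all $\boldsymbol\theta_\Lambda\in\mathbb{R}^{|\Lambda|}$, $k=1,\dots,K$; (C2) for all $k$, every measurable $g:\Omega_{\mathbf x}\to\mathbb{R}$ (for which the integrals exist) and all $\boldsymbol\theta_\Lambda$, $\nabla_{\boldsymbol\theta_\Lambda}\int_{\mathcal A_k}g(\mathbf x)f(\mathbf x\mid\hat\Lambda=\Lambda_k;\boldsymbol\theta_\Lambda)\,d\mathbf x=\int_{\mathcal A_k}g(\mathbf x)\nabla_{\boldsymbol\theta_\Lambda}f(\mathbf x\mid\hat\Lambda=\Lambda_k;\boldsymbol\theta_\Lambda)\,d\mathbf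 x$. $\succeq$ is the positive semidefinite order. *)

theory Defs
  imports "HOL-Analysis.Analysis"
begin

text \<open>Index types: 'm indexes the full parameter vector (the index set {1..M}),
  'l indexes the subvector theta_Lambda; idx l = [Lambda]_l.\<close>

definition psd_ge :: "real^'n^'n \<Rightarrow> real^'n^'n \<Rightarrow> bool" where
  "psd_ge A B \<longleftrightarrow> (\<forall>v::real^'n. v \<bullet> ((A - B) *v v) \<ge> 0)"

definition outer :: "real^'m \<Rightarrow> real^'n \<Rightarrow> real^'n^'m" where
  "outer u v = (\<chi> i j. u $ i * v $ j)"

definition zp :: "'m set \<Rightarrow> real^'m \<Rightarrow> real^'m" where
  "zp S a = (\<chi> m. if m \<in> S then a $ m else 0)"

text \<open>theta as a function of theta_Lambda: zero outside Lambda = range idx.\<close>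
definition emb :: "('l \<Rightarrow> 'm) \<Rightarrow> real^'l \<Rightarrow> real^'m" where
  "emb idx t = (\<chi> m. if m \<in> range idx then t $ (inv idx m) else 0)"

definition Dmat :: "'m set \<Rightarrow> ('l \<Rightarrow> 'm) \<Rightarrow> real^'l^'m" where
  "Dmat S idx = (\<chi> m l. if m \<in> S \<and> m = idx l then 1 else 0)"

definition partial_at :: "(real^'l \<Rightarrow> real) \<Rightarrow> real^'l \<Rightarrow> 'l \<Rightarrow> real" where
  "partial_at g t l = deriv (\<lambda>s. g (t + s *\<^sub>R axis l 1)) 0"

definition has_partial :: "(real^'l \<Rightarrow> real) \<Rightarrow> real^'l \<Rightarrow> 'l \<Rightarrow> bool" where
  "has_partial g t l \<longleftrightarrow> (\<lambda>s. g (t + s *\<^sub>R axis l 1)) differentiable (at 0)"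

definition grad :: "(real^'l \<Rightarrow> real) \<Rightarrow> real^'l \<Rightarrow> real^'l" where
  "grad g t = (\<chi> l. partial_at g t l)"

definition gradmat :: "(real^'l \<Rightarrow> real^'m) \<Rightarrow> real^'l \<Rightarrow> real^'l^'m" where
  "gradmat h t = (\<chi> m l. partial_at (\<lambda>s. h s $ m) t l)"

definition sel_prob :: "'x measure \<Rightarrow> ('x \<Rightarrow> 'p \<Rightarrow> real) \<Rightarrow> 'x set \<Rightarrow> 'p \<Rightarrow> real" where
  "sel_prob \<mu> f A t = (LINT x:A|\<mu>. f x t)"

definition cond_pdf :: "'x measure \<Rightarrow> ('x \<Rightarrow> 'p \<Rightarrow> real) \<Rightarrow> 'x set \<Rightarrow> 'x \<Rightarrow> 'p \<Rightarrow> real" where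
  "cond_pdf \<mu> f A x t = f x t / sel_prob \<mu> f A t"

definition cond_exp :: "'x measure \<Rightarrow> ('x \<Rightarrow> 'p \<Rightarrow> real) \<Rightarrow> 'x set \<Rightarrow> ('x \<Rightarrow> real) \<Rightarrow> 'p \<Rightarrow> real" where
  "cond_exp \<mu> f A g t = (LINT x:A|\<mu>. g x * cond_pdf \<mu> f A x t)"

definition cond_expv :: "'x measure \<Rightarrow> ('x \<Rightarrow> 'p \<Rightarrow> real) \<Rightarrow> 'x set \<Rightarrow> ('x \<Rightarrow> real^'m) \<Rightarrow> 'p \<Rightarrow> real^'m" where
  "cond_expv \<mu> f A g t = (\<chi> i. cond_exp \<mu> f A (\<lambda>x. g x $ i) t)"

definition Emat :: "'x measure \<Rightarrow> ('x \<Rightarrow> 'p \<Rightarrow> real) \<Rightarrow> ('x \<Rightarrow> real^'n^'m) \<Rightarrow> 'p \<Rightarrow> real^'n^'m" where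
  "Emat \<mu> f C t = (\<chi> i j. LINT x|\<mu>. C x $ i $ j * f x t)"

definition score :: "'x measure \<Rightarrow> ('x \<Rightarrow> real^'l \<Rightarrow> real) \<Rightarrow> 'x set \<Rightarrow> 'x \<Rightarrow> real^'l \<Rightarrow> real^'l" where
  "score \<mu> f A x t = grad (\<lambda>s. ln (cond_pdf \<mu> f A x s)) t"

definition sel_FIM :: "'x measure \<Rightarrow> ('x \<Rightarrow> real^'l \<Rightarrow> real) \<Rightarrow> 'x set \<Rightarrow> real^'l \<Rightarrow> real^'l^'l" where
  "sel_FIM \<mu> f A t = (\<chi> i j. cond_exp \<mu> f A (\<lambda>x. score \<mu> f A x t $ i * score \<mu> f A x t $ j) t)"

definition sel_bias :: "'x measure \<Rightarrow> ('x \<Rightarrow> real^'l \<Rightarrow> real) \<Rightarrow> 'x set \<Rightarrow> 'm set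
    \<Rightarrow> ('l \<Rightarrow> 'm) \<Rightarrow> ('x \<Rightarrow> real^'m) \<Rightarrow> real^'l \<Rightarrow> real^'m" where
  "sel_bias \<mu> f A S idx th t = cond_expv \<mu> f A (\<lambda>x. zp S (th x) - zp S (emb idx t)) t"

definition sel_region :: "'x measure \<Rightarrow> ('x \<Rightarrow> 'm set) \<Rightarrow> 'm set \<Rightarrow> 'x set" where
  "sel_region \<mu> sel S = {x \<in> space \<mu>. sel x = S}"

definition sCRB :: "'x measure \<Rightarrow> ('x \<Rightarrow> real^'l \<Rightarrow> real) \<Rightarrow> nat \<Rightarrow> (nat \<Rightarrow> 'm set)
    \<Rightarrow> ('x \<Rightarrow> 'm set) \<Rightarrow> ('l \<Rightarrow> 'm) \<Rightarrow> ('x \<Rightarrow> real^'m) \<Rightarrow> real^'l \<Rightarrow> real^'m^'m" where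
  "sCRB \<mu> f K Lam sel idx th t =
     (\<Sum>k\<in>{k\<in>{1..K}. sel_prob \<mu> f (sel_region \<mu> sel (Lam k)) t \<noteq> 0}.
        sel_prob \<mu> f (sel_region \<mu> sel (Lam k)) t *\<^sub>R
          (let A = sel_region \<mu> sel (Lam k);
               b = sel_bias \<mu> f A (Lam k) idx th;
               DG = Dmat (Lam k) idx + gradmat b t
           in DG ** matrix_inv (sel_FIM \<mu> f A t) ** transpose DG + outer (b t) (b t)))"

end

theory Submission
  imports Defs
begin


lemma cr_scalar:
  fixes M :: "'x measure" and s :: "'x \<Rightarrow> real" and u :: "'x \<Rightarrow> real^'l" and w :: "'x \<Rightarrow> real"
    and J :: "real^'l^'l" and y :: "real^'l"
  assumes w: "\<forall>x\<in>space M. 0 \<le> w x"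
  and i1: "integrable M (\<lambda>x. s x * s x * w x)"
  and i2: "\<forall>l m. integrable M (\<lambda>x. u x $ l * u x $ m * w x)"
  and i3: "\<forall>l. integrable M (\<lambda>x. s x * u x $ l * w x)"
  and Ji: "invertible J" and Jd: "J = (\<chi> l m. \<integral>x. u x $ l * u x $ m * w x \<partial>M)"
  and yd: "y = (\<chi> l. \<integral>x. s x * u x $ l * w x \<partial>M)"
  shows "y \<bullet> (matrix_inv J *v y) \<le> (\<integral>x. s x * s x * w x \<partial>M)"
proof -
  define a where "a = matrix_inv J *v y"
  have JJ: "J ** matrix_inv J = mat 1"
    using Ji unfolding invertible_def matrix_inv_def by (metis (mono_tags, lifting) someI_ex)
  have Ja: "J *v a = y" unfolding a_def
    by (simp add: matrix_vector_mul_assoc JJ)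
  have pt: "(s x - a \<bullet> u x)^2 * w x = s x * s x * w x - 2 * (\<Sum>l\<in>UNIV. a$l * (s x * u x $ l * w x))
      + (\<Sum>l\<in>UNIV. \<Sum>m\<in>UNIV. a$l * a$m * (u x $ l * u x $ m * w x))" for x
  proof -
    have e1: "s x * (a \<bullet> u x) * w x = (\<Sum>l\<in>UNIV. a$l * (s x * u x $ l * w x))"
      by (simp add: inner_vec_def sum_distrib_left sum_distrib_right algebra_simps)
    have e2: "(a \<bullet> u x) * (a \<bullet> u x) * w x = (\<Sum>l\<in>UNIV. \<Sum>m\<in>UNIV. a$l * a$m * (u x $ l * u x $ m * w x))"
    proof -
      have "a \<bullet> u x = (\<Sum>l\<in>UNIV. a$l * u x $ l)" by (simp add: inner_vec_def)
      then have "(a \<bullet> u x) * (a \<bullet> u x) * w x = (\<Sum>l\<in>UNIV. a$l * u x $ l) * (\<Sum>m\<in>UNIV. a$m * u x $ m) * w x" by simp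
      also have "\<dots> = (\<Sum>l\<in>UNIV. \<Sum>m\<in>UNIV. a$l * u x $ l * (a$m * u x $ m) * w x)"
        by (simp add: sum_distrib_left sum_distrib_right mult.commute mult.left_commute)
      finally show ?thesis by (simp add: algebra_simps)
    qed
    have "(s x - a \<bullet> u x)^2 * w x = s x * s x * w x - 2 * (s x * (a \<bullet> u x) * w x) + (a \<bullet> u x) * (a \<bullet> u x) * w x"
      by (simp add: power2_eq_square algebra_simps)
    then show ?thesis using e1 e2 by simp
  qed
  have "0 \<le> (\<integral>x. (s x - a \<bullet> u x)^2 * w x \<partial>M)"
    by (rule integral_nonneg_AE) (use w in auto)
  also have "\<dots> = (\<integral>x. s x * s x * w x \<partial>M) - 2 * (\<Sum>l\<in>UNIV. a$l * y$l)
      + (\<Sum>l\<in>UNIV. \<Sum>m\<in>UNIV. a$l * a$m * J$l$m)"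
    unfolding pt using i1 i2 i3
    by (simp add: integral_sum integrable_sum Jd yd)
  also have "(\<Sum>l\<in>UNIV. a$l * y$l) = a \<bullet> y" by (simp add: inner_vec_def mult.commute)
  also have "(\<Sum>l\<in>UNIV. \<Sum>m\<in>UNIV. a$l * a$m * J$l$m) = a \<bullet> (J *v a)"
    by (simp add: inner_vec_def matrix_vector_mult_def sum_distrib_left algebra_simps)
  finally have "0 \<le> (\<integral>x. s x * s x * w x \<partial>M) - a \<bullet> y" using Ja by simp
  then show ?thesis unfolding a_def by (simp add: inner_commute)
qed



definition L2 :: "'x measure \<Rightarrow> ('x \<Rightarrow> real) \<Rightarrow> ('x \<Rightarrow> real) \<Rightarrow> bool" where
  "L2 M w g \<longleftrightarrow> g \<in> borel_measurable M \<and> integrable M (\<lambda>x. g x * g x * w x)"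

lemma L2_prod:
  assumes wm: "w \<in> borel_measurable M" and wn: "\<forall>x\<in>space M. 0 \<le> w x"
    and g: "L2 M w g" and h: "L2 M w h"
  shows "integrable M (\<lambda>x. g x * h x * w x)"
proof (rule Bochner_Integration.integrable_bound[where f="\<lambda>x. g x * g x * w x + h x * h x * w x"])
  show "integrable M (\<lambda>x. g x * g x * w x + h x * h x * w x)"
    using g h unfolding L2_def by auto
  show "(\<lambda>x. g x * h x * w x) \<in> borel_measurable M"
    using g h wm unfolding L2_def by auto
  show "AE x in M. norm (g x * h x * w x) \<le> norm (g x * g x * w x + h x * h x * w x)"
  proof (rule AE_I2)
    fix x assume x: "x \<in> space M"
    have w0: "0 \<le> w x" using wn x by auto
    have "0 \<le> (\<bar>g x\<bar> - \<bar>h x\<bar>) * (\<bar>g x\<bar> - \<bar>h x\<bar>)" by simp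
    then have "2 * (\<bar>g x\<bar> * \<bar>h x\<bar>) \<le> \<bar>g x\<bar> * \<bar>g x\<bar> + \<bar>h x\<bar> * \<bar>h x\<bar>"
      by (simp add: algebra_simps)
    moreover have "\<bar>g x * h x\<bar> = \<bar>g x\<bar> * \<bar>h x\<bar>" by (rule abs_mult)
    moreover have "\<bar>g x\<bar> * \<bar>g x\<bar> = g x * g x" "\<bar>h x\<bar> * \<bar>h x\<bar> = h x * h x"
      by (rule abs_mult_self_eq)+
    moreover have "0 \<le> \<bar>g x\<bar> * \<bar>h x\<bar>" by simp
    ultimately have "\<bar>g x * h x\<bar> \<le> g x * g x + h x * h x" by linarith
    then have "\<bar>g x * h x\<bar> * w x \<le> (g x * g x + h x * h x) * w x"
      using w0 mult_right_mono by blast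
    moreover have "0 \<le> (g x * g x + h x * h x) * w x" using w0 by simp
    moreover have "norm (g x * h x * w x) = \<bar>g x * h x\<bar> * w x"
      using w0 by (simp add: abs_mult)
    moreover have "norm (g x * g x * w x + h x * h x * w x) = (g x * g x + h x * h x) * w x"
      using calculation(2) by (simp add: distrib_right)
    ultimately show "norm (g x * h x * w x) \<le> norm (g x * g x * w x + h x * h x * w x)"
      by linarith
  qed
qed

lemma L2_add:
  assumes wm: "w \<in> borel_measurable M" and wn: "\<forall>x\<in>space M. 0 \<le> w x"
    and g: "L2 M w g" and h: "L2 M w h"
  shows "L2 M w (\<lambda>x. g x + h x)"
proof -
  have "integrable M (\<lambda>x. g x * g x * w x + 2 * (g x * h x * w x) + h x * h x * w x)"
    using g h L2_prod[OF wm wn g h] unfolding L2_def by auto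
  moreover have "(\<lambda>x. g x * g x * w x + 2 * (g x * h x * w x) + h x * h x * w x)
     = (\<lambda>x. (g x + h x) * (g x + h x) * w x)" by (rule ext) (simp add: algebra_simps)
  ultimately show ?thesis using g h unfolding L2_def by auto
qed

lemma L2_scale:
  assumes g: "L2 M w g"
  shows "L2 M w (\<lambda>x. c * g x)"
proof -
  have "integrable M (\<lambda>x. (c * c) * (g x * g x * w x))"
    using g unfolding L2_def by auto
  moreover have "(\<lambda>x. (c * c) * (g x * g x * w x)) = (\<lambda>x. (c * g x) * (c * g x) * w x)"
    by (rule ext) (simp add: mult_ac)
  ultimately show ?thesis using g unfolding L2_def by auto
qed

lemma L2_const:
  assumes "integrable M w"
  shows "L2 M w (\<lambda>x. c)"
  using assms unfolding L2_def by (auto simp: mult.assoc)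

lemma L2_diff:
  assumes wm: "w \<in> borel_measurable M" and wn: "\<forall>x\<in>space M. 0 \<le> w x"
    and g: "L2 M w g" and h: "L2 M w h"
  shows "L2 M w (\<lambda>x. g x - h x)"
  using L2_add[OF wm wn g L2_scale[OF h, of "-1"]] by simp

lemma L2_sum:
  assumes wm: "w \<in> borel_measurable M" and wn: "\<forall>x\<in>space M. 0 \<le> w x"
    and wi: "integrable M w" and fin: "finite I"
  shows "(\<forall>i\<in>I. L2 M w (g i)) \<Longrightarrow> L2 M w (\<lambda>x. \<Sum>i\<in>I. g i x)"
  using fin
proof (induction I rule: finite_induct)
  case empty
  then show ?case using L2_const[OF wi, of 0] by simp
next
  case (insert i I)
  have e: "(\<lambda>x. \<Sum>i\<in>insert i I. g i x) = (\<lambda>x. g i x + (\<Sum>i\<in>I. g i x))"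
    using insert(1,2) by simp
  show ?case unfolding e
    by (rule L2_add[OF wm wn]) (use insert in auto)
qed

lemma L2_weight:
  assumes g: "L2 M w g" and A: "A \<in> sets M"
  shows "L2 M (\<lambda>x. indicator A x * w x / c) g"
proof -
  have "integrable M (\<lambda>x. indicator A x *\<^sub>R (g x * g x * w x) / c)"
    by (intro integrable_divide_zero integrable_mult_indicator[OF A]) (use g in \<open>simp add: L2_def\<close>)
  moreover have "(\<lambda>x. indicator A x *\<^sub>R (g x * g x * w x) / c) = (\<lambda>x. g x * g x * (indicator A x * w x / c))"
    by (rule ext) (simp add: divide_inverse mult_ac)
  ultimately show ?thesis using g unfolding L2_def by auto
qed



lemma log_partial:
  fixes \<phi> :: "real \<Rightarrow> real"
  assumes nn: "\<forall>r. 0 \<le> \<phi> r" and d: "\<phi> differentiable (at 0)"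
  shows "deriv \<phi> 0 = deriv (\<lambda>r. ln (\<phi> r)) 0 * \<phi> 0"
proof -
  have D: "DERIV \<phi> 0 :> deriv \<phi> 0" using d DERIV_deriv_iff_real_differentiable by blast
  show ?thesis
  proof (cases "\<phi> 0 = 0")
    case True
    have "deriv \<phi> 0 = 0"
      by (rule DERIV_local_min[OF D, of 1]) (use nn True in auto)
    then show ?thesis using True by simp
  next
    case False
    then have pos: "0 < \<phi> 0" using nn by (metis less_eq_real_def)
    have "DERIV (\<lambda>r. ln (\<phi> r)) 0 :> 1 / \<phi> 0 * deriv \<phi> 0"
      using DERIV_chain2[OF DERIV_ln_divide[OF pos] D] by simp
    then have "deriv (\<lambda>r. ln (\<phi> r)) 0 = 1 / \<phi> 0 * deriv \<phi> 0" by (rule DERIV_imp_deriv)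
    then show ?thesis using pos by simp
  qed
qed

definition qf :: "real^'n^'n \<Rightarrow> real^'n \<Rightarrow> real" where
  "qf M v = v \<bullet> (M *v v)"

lemma qf_add: "qf (M + N) v = qf M v + qf N v"
  unfolding qf_def by (simp add: matrix_vector_mult_add_rdistrib inner_add_right)

lemma qf_diff: "qf (M - N) v = qf M v - qf N v"
  unfolding qf_def by (simp add: matrix_vector_mult_diff_rdistrib inner_diff_right)

lemma qf_scale: "qf (c *\<^sub>R M) v = c * qf M v"
  unfolding qf_def by (simp add: inner_vec_def matrix_vector_mult_def sum_distrib_left mult_ac)

lemma qf_zero: "qf 0 v = 0"
  unfolding qf_def by simp

lemma qf_sum: "finite S \<Longrightarrow> qf (\<Sum>k\<in>S. M k) v = (\<Sum>k\<in>S. qf (M k) v)"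
  by (induction S rule: finite_induct) (simp_all add: qf_zero qf_add)

lemma outer_mv: "outer a b *v v = (b \<bullet> v) *\<^sub>R a"
  by (simp add: vec_eq_iff outer_def matrix_vector_mult_def inner_vec_def sum_distrib_left mult_ac)

lemma qf_outer: "qf (outer a b) v = (v \<bullet> a) * (v \<bullet> b)"
  unfolding qf_def outer_mv by (simp add: inner_commute)

lemma qf_psd: "psd_ge A B \<longleftrightarrow> (\<forall>v. qf B v \<le> qf A v)"
  unfolding psd_ge_def qf_def
  by (simp add: matrix_vector_mult_diff_rdistrib inner_diff_right)

lemma sq_expand:
  fixes v :: "real^'n"
  shows "(v \<bullet> E)^2 * w = (\<Sum>i\<in>UNIV. \<Sum>j\<in>UNIV. v$i * v$j * (E $ i * E $ j * w))"
proof -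
  have "(v \<bullet> E)^2 * w = (\<Sum>i\<in>UNIV. v$i * E $ i) * (\<Sum>j\<in>UNIV. v$j * E $ j) * w"
    by (simp add: inner_vec_def power2_eq_square)
  also have "\<dots> = (\<Sum>i\<in>UNIV. \<Sum>j\<in>UNIV. v$i * E $ i * (v$j * E $ j) * w)"
    by (simp add: sum_distrib_left sum_distrib_right mult.commute mult.left_commute)
  finally show ?thesis by (simp add: mult_ac)
qed

lemma qf_Emat:
  fixes E :: "'x \<Rightarrow> real^'m"
  assumes I: "\<forall>i j. integrable M (\<lambda>x. E x $ i * E x $ j * f x t)"
  shows "qf (Emat M f (\<lambda>x. outer (E x) (E x)) t) v = (\<integral>x. (v \<bullet> E x)^2 * f x t \<partial>M)"
proof -
  have "qf (Emat M f (\<lambda>x. outer (E x) (E x)) t) v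
      = (\<Sum>i\<in>UNIV. \<Sum>j\<in>UNIV. v$i * v$j * (\<integral>x. E x $ i * E x $ j * f x t \<partial>M))"
    unfolding qf_def Emat_def outer_def
    by (simp add: inner_vec_def matrix_vector_mult_def sum_distrib_left mult_ac)
  also have "\<dots> = (\<integral>x. (\<Sum>i\<in>UNIV. \<Sum>j\<in>UNIV. v$i * v$j * (E x $ i * E x $ j * f x t)) \<partial>M)"
    using I by (simp add: integral_sum integrable_sum)
  also have "\<dots> = (\<integral>x. (v \<bullet> E x)^2 * f x t \<partial>M)"
    by (simp add: sq_expand)
  finally show ?thesis .
qed

theorem theorem1:
  fixes \<mu> :: "'x measure"
    and f :: "'x \<Rightarrow> real^('l::{finite,linorder}) \<Rightarrow> real"
    and K :: nat
    and Lam :: "nat \<Rightarrow> ('m::{finite,linorder}) set"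
    and \<Lambda> :: "('m::{finite,linorder}) set"
    and idx :: "('l::{finite,linorder}) \<Rightarrow> ('m::{finite,linorder})"
    and sel :: "'x \<Rightarrow> ('m::{finite,linorder}) set"
    and th :: "'x \<Rightarrow> real^('m::{finite,linorder})"
    and \<theta> :: "real^('m::{finite,linorder})"
  defines "A \<equiv> (\<lambda>k. sel_region \<mu> sel (Lam k))"
    and "cpdf \<equiv> (\<lambda>k. cond_pdf \<mu> f (sel_region \<mu> sel (Lam k)))"
    and "\<pi> \<equiv> (\<lambda>k. sel_prob \<mu> f (sel_region \<mu> sel (Lam k)))"
    and "b \<equiv> (\<lambda>k. sel_bias \<mu> f (sel_region \<mu> sel (Lam k)) (Lam k) idx th)"
    and "t0 \<equiv> (\<chi> l. \<theta> $ idx l)"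
  assumes cand_nonempty: "\<forall>k\<in>{1..K}. Lam k \<noteq> {}"
    and cand_distinct: "inj_on Lam {1..K}"
    and true_supp: "\<Lambda> \<in> Lam ` {1..K}"
    and idx_bij: "bij_betw idx UNIV \<Lambda>"
    and idx_mono: "strict_mono idx"
    and theta_supp: "\<forall>m. m \<notin> \<Lambda> \<longrightarrow> \<theta> $ m = 0"
    and pdf: "\<forall>t. (\<lambda>x. f x t) \<in> borel_measurable \<mu> \<and> (\<forall>x\<in>space \<mu>. 0 \<le> f x t)
               \<and> integrable \<mu> (\<lambda>x. f x t) \<and> (\<integral>x. f x t \<partial>\<mu>) = 1"
    and sel_range: "\<forall>x\<in>space \<mu>. sel x \<in> Lam ` {1..K}"
    and sel_meas: "\<forall>k\<in>{1..K}. A k \<in> sets \<mu>"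
    and est_meas: "th \<in> borel_measurable \<mu>"
    and est_second_moments: "\<forall>t m. integrable \<mu> (\<lambda>x. (th x $ m)^2 * f x t)"
    and coherent: "\<forall>x\<in>space \<mu>. \<forall>m. m \<notin> sel x \<longrightarrow> th x $ m = 0"
    and bias_diff: "\<forall>k\<in>{1..K}. \<forall>t. b k differentiable (at t)"
    and C1: "\<forall>k\<in>{1..K}. \<forall>t.
               (\<forall>x\<in>A k. \<forall>l. has_partial (\<lambda>s. ln (cpdf k x s)) t l)
             \<and> (\<forall>l. set_borel_measurable \<mu> (A k) (\<lambda>x. score \<mu> f (A k) x t $ l))
             \<and> (\<forall>i j. set_integrable \<mu> (A k)
                   (\<lambda>x. score \<mu> f (A k) x t $ i * score \<mu> f (A k) x t $ j * cpdf k x t))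
             \<and> invertible (sel_FIM \<mu> f (A k) t)"
    and C2_exists: "\<forall>k\<in>{1..K}. \<forall>t. \<forall>x\<in>A k. \<forall>l. has_partial (cpdf k x) t l"
    and C2: "\<forall>k\<in>{1..K}. \<forall>g\<in>borel_measurable \<mu>. \<forall>t l.
               (\<forall>s. set_integrable \<mu> (A k) (\<lambda>x. g x * cpdf k x s))
             \<and> set_integrable \<mu> (A k) (\<lambda>x. g x * partial_at (cpdf k x) t l)
             \<longrightarrow> ((\<lambda>s. LINT x:A k|\<mu>. g x * cpdf k x (t + s *\<^sub>R axis l 1))
                    has_real_derivative (LINT x:A k|\<mu>. g x * partial_at (cpdf k x) t l)) (at 0)"
  shows "psd_ge (Emat \<mu> f (\<lambda>x. outer (zp (sel x) (th x) - zp (sel x) \<theta>)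
                                      (zp (sel x) (th x) - zp (sel x) \<theta>)) t0)
                (sCRB \<mu> f K Lam sel idx th t0)
       \<and> psd_ge (Emat \<mu> f (\<lambda>x. outer (th x - \<theta>) (th x - \<theta>)) t0)
                (sCRB \<mu> f K Lam sel idx th t0
                 + (\<Sum>k=1..K. \<pi> k t0 *\<^sub>R outer (zp (- Lam k) \<theta>) (zp (- Lam k) \<theta>))
                 - (\<Sum>k=1..K. \<pi> k t0 *\<^sub>R (outer (zp (- Lam k) \<theta>) (b k t0)
                                            + outer (b k t0) (zp (- Lam k) \<theta>))))
       \<and> ((\<forall>k\<in>{1..K}. \<forall>s. b k s = 0) \<longrightarrow>
            sCRB \<mu> f K Lam sel idx th t0
              = (\<Sum>k\<in>{k\<in>{1..K}. \<pi> k t0 \<noteq> 0}.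
                   \<pi> k t0 *\<^sub>R (Dmat (Lam k) idx ** matrix_inv (sel_FIM \<mu> f (A k) t0)
                                   ** transpose (Dmat (Lam k) idx))))"
proof -
  have fm: "\<And>t. (\<lambda>x. f x t) \<in> borel_measurable \<mu>" using pdf by blast
  have fnn: "\<And>t x. x \<in> space \<mu> \<Longrightarrow> 0 \<le> f x t" using pdf by blast
  have fi: "\<And>t. integrable \<mu> (\<lambda>x. f x t)" using pdf by blast
  have Asets: "\<And>k. k \<in> {1..K} \<Longrightarrow> A k \<in> sets \<mu>" using sel_meas by blast
  have Asub: "\<And>k. A k \<subseteq> space \<mu>" unfolding A_def sel_region_def by auto
  have cpdfA: "\<And>k. cond_pdf \<mu> f (A k) = cpdf k" unfolding A_def cpdf_def by simp
  have piA: "\<And>k. sel_prob \<mu> f (A k) = \<pi> k" unfolding A_def \<pi>_def by simp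
  have cpdf_eq: "\<And>k x t. cpdf k x t = f x t / \<pi> k t"
    unfolding cpdf_def \<pi>_def cond_pdf_def by simp
  have pi_int: "\<And>k t. \<pi> k t = (\<integral>x. indicator (A k) x * f x t \<partial>\<mu>)"
    unfolding \<pi>_def A_def sel_prob_def set_lebesgue_integral_def by simp
  have pi_nn: "\<And>k t. 0 \<le> \<pi> k t"
    unfolding pi_int by (rule integral_nonneg_AE) (use fnn in \<open>auto simp: indicator_def\<close>)
  have pi_ne: "\<pi> k t \<noteq> 0" if k: "k \<in> {1..K}" for k t
  proof
    assume p0: "\<pi> k t = 0"
    have "sel_FIM \<mu> f (A k) t = 0"
      unfolding sel_FIM_def cond_exp_def cpdfA by (simp add: cpdf_eq p0 vec_eq_iff)
    note F0 = this
    have "invertible (sel_FIM \<mu> f (A k) t)" using C1 k by blast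
    then obtain B where "sel_FIM \<mu> f (A k) t ** B = mat 1" unfolding invertible_def by blast
    then have M0: "mat 1 = 0 ** B" using F0 by simp
    from arg_cong[OF M0, of "\<lambda>M. M $ undefined $ undefined"] show False by (simp add: mat_def)
  qed
  have pi_pos: "0 < \<pi> k t" if "k \<in> {1..K}" for k t
    using pi_nn pi_ne that by (metis less_eq_real_def)
  have inj_idx: "inj idx" using idx_bij bij_betw_imp_inj_on by blast
  have range_idx: "range idx = \<Lambda>" using idx_bij bij_betw_imp_surj_on by blast
  have emb_t0: "emb idx t0 = \<theta>"
    unfolding emb_def t0_def vec_eq_iff using range_idx theta_supp
    by (auto simp: f_inv_into_f)
  have thm_i: "\<And>i. (\<lambda>x. th x $ i) \<in> borel_measurable \<mu>"
    using est_meas borel_measurable_nth measurable_compose by blast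

  define e where "e = (\<lambda>k x. zp (Lam k) (th x) - zp (Lam k) \<theta>)"
  define c where "c = (\<lambda>k. zp (- Lam k) \<theta>)"
  define w where "w = (\<lambda>k t x. indicator (A k) x * f x t / \<pi> k t)"
  define U where "U = (\<lambda>k t x. (\<chi> l. indicator (A k) x * score \<mu> f (A k) x t $ l))"
  define Z where "Z = (\<lambda>k i x. zp (Lam k) (th x) $ i)"
  have wm: "w k t \<in> borel_measurable \<mu>" if k: "k \<in> {1..K}" for k t
    unfolding w_def
    by (intro borel_measurable_divide borel_measurable_times borel_measurable_indicator fm Asets[OF k]
        borel_measurable_const)
  have wnn: "\<forall>x\<in>space \<mu>. 0 \<le> w k t x" for k t
    unfolding w_def using fnn pi_nn by (auto intro!: divide_nonneg_nonneg)
  have wi: "integrable \<mu> (w k t)" if k: "k \<in> {1..K}" for k t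
  proof -
    have "integrable \<mu> (\<lambda>x. indicator (A k) x *\<^sub>R f x t / \<pi> k t)"
      by (intro integrable_divide_zero integrable_mult_indicator Asets[OF k] fi)
    then show ?thesis unfolding w_def by simp
  qed
  have w1: "(\<integral>x. w k t x \<partial>\<mu>) = 1" if k: "k \<in> {1..K}" for k t
    unfolding w_def using pi_ne[OF k] by (simp add: pi_int)
  have w_cpdf: "w k t x = indicator (A k) x * cpdf k x t" for k t x
    unfolding w_def cpdf_eq by simp
  have L2th: "L2 \<mu> (\<lambda>x. f x t) (\<lambda>x. th x $ i)" for t i
    unfolding L2_def using thm_i est_second_moments by (simp add: power2_eq_square)
  have L2wf: "L2 \<mu> (w k t) g" if k: "k \<in> {1..K}" and g: "L2 \<mu> (\<lambda>x. f x t) g" for k t g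
    using L2_weight[OF g Asets[OF k], of "\<pi> k t"] unfolding w_def by simp
  have L2Z: "L2 \<mu> (\<lambda>x. f x t) (Z k i)" for k t i
  proof (cases "i \<in> Lam k")
    case True
    then have "Z k i = (\<lambda>x. th x $ i)" unfolding Z_def zp_def by simp
    then show ?thesis using L2th by simp
  next
    case False
    then have "Z k i = (\<lambda>x. 0)" unfolding Z_def zp_def by simp
    then show ?thesis using L2_const[OF fi] by simp
  qed
  have L2e: "L2 \<mu> (\<lambda>x. f x t) (\<lambda>x. e k x $ i)" for k t i
  proof -
    have "(\<lambda>x. e k x $ i) = (\<lambda>x. Z k i x - zp (Lam k) \<theta> $ i)" unfolding e_def Z_def by simp
    then show ?thesis using L2_diff[OF fm, of t, OF _ L2Z L2_const[OF fi]] fnn by simp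
  qed
  have L2lin: "L2 \<mu> (\<lambda>x. f x t) (\<lambda>x. v \<bullet> F x)" if F: "\<And>i. L2 \<mu> (\<lambda>x. f x t) (\<lambda>x. F x $ i)" for F :: "'x \<Rightarrow> real^('m::{finite,linorder})" and v t
  proof -
    have "L2 \<mu> (\<lambda>x. f x t) (\<lambda>x. \<Sum>i\<in>UNIV. v $ i * F x $ i)"
      by (rule L2_sum[OF fm _ fi]) (auto intro!: L2_scale F fnn)
    then show ?thesis by (simp add: inner_vec_def)
  qed
  have L2U: "L2 \<mu> (w k t) (\<lambda>x. U k t x $ l)" if k: "k \<in> {1..K}" for k t l
  proof -
    have m: "(\<lambda>x. indicator (A k) x *\<^sub>R score \<mu> f (A k) x t $ l) \<in> borel_measurable \<mu>"
      using C1 k unfolding set_borel_measurable_def by blast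
    have i: "integrable \<mu> (\<lambda>x. indicator (A k) x *\<^sub>R (score \<mu> f (A k) x t $ l * score \<mu> f (A k) x t $ l * cpdf k x t))"
      using C1 k unfolding set_integrable_def by blast
    have "(\<lambda>x. indicator (A k) x *\<^sub>R (score \<mu> f (A k) x t $ l * score \<mu> f (A k) x t $ l * cpdf k x t))
       = (\<lambda>x. U k t x $ l * U k t x $ l * w k t x)"
      by (rule ext) (simp add: U_def w_cpdf indicator_def)
    then show ?thesis using m i unfolding L2_def U_def by simp
  qed


  have Pl: "partial_at (cpdf k x) t l = score \<mu> f (A k) x t $ l * cpdf k x t"
    if k: "k \<in> {1..K}" and x: "x \<in> A k" for k x t l
  proof -
    have nn: "\<forall>r. 0 \<le> cpdf k x (t + r *\<^sub>R axis l 1)"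
      using Asub x fnn pi_nn by (auto simp: cpdf_eq intro!: divide_nonneg_nonneg)
    have d: "(\<lambda>r. cpdf k x (t + r *\<^sub>R axis l 1)) differentiable (at 0)"
      using C2_exists k x unfolding has_partial_def by blast
    have "score \<mu> f (A k) x t $ l = partial_at (\<lambda>s. ln (cpdf k x s)) t l"
      unfolding score_def grad_def cpdfA by simp
    then show ?thesis unfolding partial_at_def using log_partial[OF nn d] by simp
  qed
  have C2': "DERIV (\<lambda>r. LINT x:A k|\<mu>. g x * cpdf k x (t + r *\<^sub>R axis l 1)) 0 :> (\<integral>x. g x * U k t x $ l * w k t x \<partial>\<mu>)"
    if k: "k \<in> {1..K}" and gm: "g \<in> borel_measurable \<mu>" and gL: "\<And>s. L2 \<mu> (\<lambda>x. f x s) g" for k g t l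
  proof -
    have eqP: "(\<lambda>x. indicator (A k) x *\<^sub>R (g x * partial_at (cpdf k x) t l)) = (\<lambda>x. g x * U k t x $ l * w k t x)"
    proof (rule ext)
      fix x show "indicator (A k) x *\<^sub>R (g x * partial_at (cpdf k x) t l) = g x * U k t x $ l * w k t x"
        by (cases "x \<in> A k") (simp_all add: U_def w_cpdf Pl[OF k])
    qed
    have i1: "\<forall>s. set_integrable \<mu> (A k) (\<lambda>x. g x * cpdf k x s)"
    proof
      fix s
      have "(\<lambda>x. indicator (A k) x *\<^sub>R (g x * cpdf k x s)) = (\<lambda>x. g x * 1 * w k s x)"
        by (rule ext) (simp add: w_cpdf)
      moreover have "integrable \<mu> (\<lambda>x. g x * 1 * w k s x)"
        by (rule L2_prod[OF wm[OF k] wnn L2wf[OF k gL] L2wf[OF k L2_const[OF fi]]])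
      ultimately show "set_integrable \<mu> (A k) (\<lambda>x. g x * cpdf k x s)"
        unfolding set_integrable_def by simp
    qed
    have i2: "set_integrable \<mu> (A k) (\<lambda>x. g x * partial_at (cpdf k x) t l)"
      unfolding set_integrable_def eqP by (rule L2_prod[OF wm[OF k] wnn L2wf[OF k gL] L2U[OF k]])
    have "DERIV (\<lambda>r. LINT x:A k|\<mu>. g x * cpdf k x (t + r *\<^sub>R axis l 1)) 0 :> (LINT x:A k|\<mu>. g x * partial_at (cpdf k x) t l)"
      using C2 k gm i1 i2 by blast
    moreover have "(LINT x:A k|\<mu>. g x * partial_at (cpdf k x) t l) = (\<integral>x. g x * U k t x $ l * w k t x \<partial>\<mu>)"
      unfolding set_lebesgue_integral_def eqP ..
    ultimately show ?thesis by simp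
  qed
  have setw: "(LINT x:A k|\<mu>. g x * cpdf k x s) = (\<integral>x. g x * 1 * w k s x \<partial>\<mu>)" for k g s
    unfolding set_lebesgue_integral_def by (rule Bochner_Integration.integral_cong) (simp_all add: w_cpdf)
  have U0: "(\<integral>x. 1 * U k t x $ l * w k t x \<partial>\<mu>) = 0" if k: "k \<in> {1..K}" for k t l
  proof -
    have D: "DERIV (\<lambda>r. LINT x:A k|\<mu>. 1 * cpdf k x (t + r *\<^sub>R axis l 1)) 0 :> (\<integral>x. 1 * U k t x $ l * w k t x \<partial>\<mu>)"
      by (rule C2'[OF k]) (simp_all add: L2_const[OF fi])
    have "(\<lambda>r. LINT x:A k|\<mu>. 1 * cpdf k x (t + r *\<^sub>R axis l 1)) = (\<lambda>r. 1)"
      unfolding setw using w1[OF k] by simp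
    then have "DERIV (\<lambda>r. 1::real) 0 :> (\<integral>x. 1 * U k t x $ l * w k t x \<partial>\<mu>)" using D by simp
    then show ?thesis using DERIV_const DERIV_unique by blast
  qed
  have bk: "b k s $ i = (LINT x:A k|\<mu>. (Z k i x - zp (Lam k) (emb idx s) $ i) * cpdf k x s)" for k s i
    unfolding b_def sel_bias_def cond_expv_def cond_exp_def by (simp add: A_def cpdf_def Z_def)
  have bform: "b k s $ i = (\<integral>x. Z k i x * 1 * w k s x \<partial>\<mu>) - zp (Lam k) (emb idx s) $ i"
    if k: "k \<in> {1..K}" for k s i
  proof -
    have "b k s $ i = (\<integral>x. Z k i x * 1 * w k s x - zp (Lam k) (emb idx s) $ i * w k s x \<partial>\<mu>)"
      unfolding bk set_lebesgue_integral_def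
      by (rule Bochner_Integration.integral_cong) (simp_all add: w_cpdf algebra_simps)
    also have "\<dots> = (\<integral>x. Z k i x * 1 * w k s x \<partial>\<mu>) - zp (Lam k) (emb idx s) $ i * (\<integral>x. w k s x \<partial>\<mu>)"
    proof -
      have I1: "integrable \<mu> (\<lambda>x. Z k i x * 1 * w k s x)"
        using L2_prod[OF wm[OF k] wnn L2wf[OF k L2Z] L2wf[OF k L2_const[OF fi]]] .
      have I2: "integrable \<mu> (\<lambda>x. zp (Lam k) (emb idx s) $ i * w k s x)"
        using wi[OF k] by simp
      show ?thesis by (subst Bochner_Integration.integral_diff[OF I1 I2]) simp
    qed
    finally show ?thesis using w1[OF k] by simp
  qed
  have Zlin: "zp (Lam k) (emb idx (t0 + r *\<^sub>R axis l 1)) $ i = zp (Lam k) (emb idx t0) $ i + r * Dmat (Lam k) idx $ i $ l"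
    for k r l i
    unfolding zp_def emb_def Dmat_def axis_def using inj_idx by (auto simp: inv_f_f)
  have DGeq: "(Dmat (Lam k) idx + gradmat (b k) t0) $ i $ l = (\<integral>x. Z k i x * U k t0 x $ l * w k t0 x \<partial>\<mu>)"
    if k: "k \<in> {1..K}" for k i l
  proof -
    have Zm: "Z k i \<in> borel_measurable \<mu>" using L2Z unfolding L2_def by blast
    have D1: "DERIV (\<lambda>r. \<integral>x. Z k i x * w k (t0 + r *\<^sub>R axis l 1) x \<partial>\<mu>) 0 :> (\<integral>x. Z k i x * U k t0 x $ l * w k t0 x \<partial>\<mu>)"
      using C2'[OF k Zm L2Z, of t0 l] unfolding setw by simp
    have fe: "(\<lambda>r. b k (t0 + r *\<^sub>R axis l 1) $ i) = (\<lambda>r. (\<integral>x. Z k i x * w k (t0 + r *\<^sub>R axis l 1) x \<partial>\<mu>)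
        - (zp (Lam k) (emb idx t0) $ i + r * Dmat (Lam k) idx $ i $ l))"
      by (rule ext) (simp add: bform[OF k] Zlin)
    have "DERIV (\<lambda>r. b k (t0 + r *\<^sub>R axis l 1) $ i) 0 :> (\<integral>x. Z k i x * U k t0 x $ l * w k t0 x \<partial>\<mu>) - Dmat (Lam k) idx $ i $ l"
    proof -
      have D2: "DERIV (\<lambda>r. zp (Lam k) (emb idx t0) $ i + r * Dmat (Lam k) idx $ i $ l) 0 :> Dmat (Lam k) idx $ i $ l"
        by (intro derivative_eq_intros) auto
      show ?thesis unfolding fe using DERIV_diff[OF D1 D2] .
    qed
    then have "gradmat (b k) t0 $ i $ l = (\<integral>x. Z k i x * U k t0 x $ l * w k t0 x \<partial>\<mu>) - Dmat (Lam k) idx $ i $ l"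
      unfolding gradmat_def partial_at_def by (simp add: DERIV_imp_deriv)
    then show ?thesis by simp
  qed


  have Jeq: "sel_FIM \<mu> f (A k) t0 = (\<chi> l m. \<integral>x. U k t0 x $ l * U k t0 x $ m * w k t0 x \<partial>\<mu>)" for k
    unfolding sel_FIM_def cond_exp_def cpdfA vec_eq_iff set_lebesgue_integral_def
  proof (intro allI)
    fix l m
    show "(\<chi> i j. \<integral>x. indicator (A k) x *\<^sub>R (score \<mu> f (A k) x t0 $ i * score \<mu> f (A k) x t0 $ j * cpdf k x t0) \<partial>\<mu>) $ l $ m =
          (\<chi> l m. \<integral>x. U k t0 x $ l * U k t0 x $ m * w k t0 x \<partial>\<mu>) $ l $ m"
      apply simp
      apply (rule Bochner_Integration.integral_cong[OF refl])
      subgoal for x by (cases "x \<in> A k") (simp_all add: U_def w_cpdf)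
      done
  qed
  have bcomp: "b k t0 $ i = (\<integral>x. e k x $ i * 1 * w k t0 x \<partial>\<mu>)" for k i
  proof -
    have "b k t0 $ i = (LINT x:A k|\<mu>. e k x $ i * cpdf k x t0)"
      unfolding bk emb_t0 by (simp add: e_def Z_def)
    then show ?thesis unfolding setw .
  qed
  have F2: "(\<integral>x. (v \<bullet> e k x) * 1 * w k t0 x \<partial>\<mu>) = v \<bullet> b k t0" if k: "k \<in> {1..K}" for k v
  proof -
    have I: "integrable \<mu> (\<lambda>x. e k x $ i * 1 * w k t0 x)" for i
      by (rule L2_prod[OF wm[OF k] wnn L2wf[OF k L2e] L2wf[OF k L2_const[OF fi]]])
    have "(\<integral>x. (v \<bullet> e k x) * 1 * w k t0 x \<partial>\<mu>) = (\<integral>x. (\<Sum>i\<in>UNIV. v $ i * (e k x $ i * 1 * w k t0 x)) \<partial>\<mu>)"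
      by (simp add: inner_vec_def sum_distrib_left sum_distrib_right mult_ac)
    also have "\<dots> = (\<Sum>i\<in>UNIV. v $ i * (\<integral>x. e k x $ i * 1 * w k t0 x \<partial>\<mu>))"
      using I by (simp add: integral_sum)
    also have "\<dots> = v \<bullet> b k t0" by (simp add: bcomp inner_vec_def)
    finally show ?thesis .
  qed
  define DG where "DG = (\<lambda>k. Dmat (Lam k) idx + gradmat (b k) t0)"
  define R where "R = (\<lambda>k. DG k ** matrix_inv (sel_FIM \<mu> f (A k) t0) ** transpose (DG k) + outer (b k t0) (b k t0))"
  have KEY: "qf (R k) v \<le> (\<integral>x. (v \<bullet> e k x)^2 * w k t0 x \<partial>\<mu>)" if k: "k \<in> {1..K}" for k v
  proof -
    define vb where "vb = v \<bullet> b k t0"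
    define C0 where "C0 = v \<bullet> zp (Lam k) \<theta> + vb"
    define s where "s = (\<lambda>x. v \<bullet> e k x - vb)"
    define J where "J = sel_FIM \<mu> f (A k) t0"
    define y where "y = transpose (DG k) *v v"
    have L2ve: "L2 \<mu> (w k t0) (\<lambda>x. v \<bullet> e k x)" by (rule L2wf[OF k L2lin[OF L2e]])
    have L2s: "L2 \<mu> (w k t0) s" unfolding s_def
      by (rule L2_diff[OF wm[OF k] wnn L2ve L2_const[OF wi[OF k]]])
    have L21: "L2 \<mu> (w k t0) (\<lambda>x. 1)" by (rule L2_const[OF wi[OF k]])
    have i1: "integrable \<mu> (\<lambda>x. s x * s x * w k t0 x)" by (rule L2_prod[OF wm[OF k] wnn L2s L2s])
    have i2: "\<forall>l m. integrable \<mu> (\<lambda>x. U k t0 x $ l * U k t0 x $ m * w k t0 x)"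
      using L2_prod[OF wm[OF k] wnn L2U[OF k] L2U[OF k]] by blast
    have i3: "\<forall>l. integrable \<mu> (\<lambda>x. s x * U k t0 x $ l * w k t0 x)"
      using L2_prod[OF wm[OF k] wnn L2s L2U[OF k]] by blast
    have Ji: "invertible J" unfolding J_def using C1 k by blast
    have yeq: "y = (\<chi> l. \<integral>x. s x * U k t0 x $ l * w k t0 x \<partial>\<mu>)"
    proof -
      have "y $ l = (\<integral>x. s x * U k t0 x $ l * w k t0 x \<partial>\<mu>)" for l
      proof -
        have IZ: "integrable \<mu> (\<lambda>x. Z k i x * U k t0 x $ l * w k t0 x)" for i
          by (rule L2_prod[OF wm[OF k] wnn L2wf[OF k L2Z] L2U[OF k]])
        have I1: "integrable \<mu> (\<lambda>x. 1 * U k t0 x $ l * w k t0 x)"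
          by (rule L2_prod[OF wm[OF k] wnn L21 L2U[OF k]])
        have se: "s x = (\<Sum>i\<in>UNIV. v $ i * Z k i x) - C0" for x
          unfolding s_def C0_def e_def Z_def
          by (simp add: inner_vec_def algebra_simps sum_subtractf)
        have "(\<integral>x. s x * U k t0 x $ l * w k t0 x \<partial>\<mu>)
            = (\<integral>x. (\<Sum>i\<in>UNIV. v $ i * (Z k i x * U k t0 x $ l * w k t0 x)) - C0 * (1 * U k t0 x $ l * w k t0 x) \<partial>\<mu>)"
          unfolding se by (simp add: sum_distrib_left sum_distrib_right algebra_simps)
        also have "\<dots> = (\<Sum>i\<in>UNIV. v $ i * (\<integral>x. Z k i x * U k t0 x $ l * w k t0 x \<partial>\<mu>))
               - C0 * (\<integral>x. 1 * U k t0 x $ l * w k t0 x \<partial>\<mu>)"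
          using IZ I1 by (simp add: Bochner_Integration.integral_diff integral_sum)
        also have "\<dots> = (\<Sum>i\<in>UNIV. v $ i * DG k $ i $ l)"
          using U0[OF k] DGeq[OF k] unfolding DG_def by simp
        also have "\<dots> = y $ l"
          unfolding y_def by (simp add: vector_matrix_mult_def mult.commute)
        finally show ?thesis by simp
      qed
      then show ?thesis by (simp add: vec_eq_iff)
    qed
    have CR: "y \<bullet> (matrix_inv J *v y) \<le> (\<integral>x. s x * s x * w k t0 x \<partial>\<mu>)"
      by (rule cr_scalar[OF wnn i1 i2 i3 Ji _ yeq]) (simp add: J_def Jeq)
    have q1: "qf (DG k ** matrix_inv J ** transpose (DG k)) v = y \<bullet> (matrix_inv J *v y)"
      unfolding qf_def y_def
      by (simp add: matrix_vector_mul_assoc[symmetric] dot_lmul_matrix[symmetric])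
    have ss: "(\<integral>x. s x * s x * w k t0 x \<partial>\<mu>) = (\<integral>x. (v \<bullet> e k x)^2 * w k t0 x \<partial>\<mu>) - vb * vb"
    proof -
      have Iq: "integrable \<mu> (\<lambda>x. (v \<bullet> e k x) * (v \<bullet> e k x) * w k t0 x)"
        by (rule L2_prod[OF wm[OF k] wnn L2ve L2ve])
      have Il: "integrable \<mu> (\<lambda>x. (v \<bullet> e k x) * 1 * w k t0 x)"
        by (rule L2_prod[OF wm[OF k] wnn L2ve L21])
      have "(\<integral>x. s x * s x * w k t0 x \<partial>\<mu>) = (\<integral>x. (v \<bullet> e k x) * (v \<bullet> e k x) * w k t0 x
              - 2 * vb * ((v \<bullet> e k x) * 1 * w k t0 x) + vb * vb * w k t0 x \<partial>\<mu>)"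
        unfolding s_def by (simp add: algebra_simps)
      also have "\<dots> = (\<integral>x. (v \<bullet> e k x) * (v \<bullet> e k x) * w k t0 x \<partial>\<mu>)
              - 2 * vb * (\<integral>x. (v \<bullet> e k x) * 1 * w k t0 x \<partial>\<mu>) + vb * vb * (\<integral>x. w k t0 x \<partial>\<mu>)"
        using Iq Il wi[OF k] by (simp add: Bochner_Integration.integral_diff Bochner_Integration.integral_add)
      also have "\<dots> = (\<integral>x. (v \<bullet> e k x)^2 * w k t0 x \<partial>\<mu>) - vb * vb"
        using F2[OF k, of v] w1[OF k] unfolding vb_def by (simp add: power2_eq_square)
      finally show ?thesis .
    qed
    have "qf (R k) v = y \<bullet> (matrix_inv J *v y) + vb * vb"
      unfolding R_def qf_add q1[unfolded J_def] qf_outer vb_def J_def ..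
    then show ?thesis using CR ss by simp
  qed


  have sumw: "(\<Sum>k\<in>{1..K}. \<pi> k t0 * (G k * w k t0 x)) = G k0 * f x t0"
    if x: "x \<in> space \<mu>" and k0: "k0 \<in> {1..K}" and sx: "sel x = Lam k0" for x k0 and G :: "nat \<Rightarrow> real"
  proof -
    have ind: "indicator (A k) x = (if k = k0 then 1 else (0::real))" if k: "k \<in> {1..K}" for k
    proof -
      have "x \<in> A k \<longleftrightarrow> Lam k0 = Lam k" using x sx unfolding A_def sel_region_def by auto
      also have "\<dots> \<longleftrightarrow> k = k0" using cand_distinct k k0 inj_on_eq_iff by metis
      finally show ?thesis by (simp add: indicator_def)
    qed
    have "(\<Sum>k\<in>{1..K}. \<pi> k t0 * (G k * w k t0 x)) = (\<Sum>k\<in>{1..K}. if k = k0 then G k * f x t0 else 0)"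
      by (rule sum.cong[OF refl]) (simp add: w_def ind pi_ne)
    also have "\<dots> = G k0 * f x t0" using k0 by simp
    finally show ?thesis .
  qed
  have EM: "qf (Emat \<mu> f (\<lambda>x. outer (E x) (E x)) t0) v = (\<Sum>k\<in>{1..K}. \<pi> k t0 * (\<integral>x. (v \<bullet> Ek k x)^2 * w k t0 x \<partial>\<mu>))"
    if rep: "\<And>x k. x \<in> space \<mu> \<Longrightarrow> k \<in> {1..K} \<Longrightarrow> sel x = Lam k \<Longrightarrow> E x = Ek k x"
      and L: "\<And>k i. L2 \<mu> (\<lambda>x. f x t0) (\<lambda>x. Ek k x $ i)"
    for E :: "'x \<Rightarrow> real^('m::{finite,linorder})" and Ek v
  proof -
    have pw: "G' (E x) * f x t0 = (\<Sum>k\<in>{1..K}. \<pi> k t0 * (G' (Ek k x) * w k t0 x))"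
      if x: "x \<in> space \<mu>" for x G'
    proof -
      obtain k0 where k0: "k0 \<in> {1..K}" "sel x = Lam k0" using sel_range x by blast
      show ?thesis using sumw[OF x k0, of "\<lambda>k. G' (Ek k x)"] rep[OF x k0] by simp
    qed
    have Iij: "integrable \<mu> (\<lambda>x. E x $ i * E x $ j * f x t0)" for i j
    proof -
      have "integrable \<mu> (\<lambda>x. Ek k x $ i * Ek k x $ j * w k t0 x)" if k: "k \<in> {1..K}" for k
        using L2_prod[OF wm[OF k] wnn L2wf[OF k L] L2wf[OF k L]] .
      then have "integrable \<mu> (\<lambda>x. \<Sum>k\<in>{1..K}. \<pi> k t0 * (Ek k x $ i * Ek k x $ j * w k t0 x))"
        by (intro Bochner_Integration.integrable_sum Bochner_Integration.integrable_mult_right) auto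
      moreover have "integrable \<mu> (\<lambda>x. E x $ i * E x $ j * f x t0) \<longleftrightarrow>
          integrable \<mu> (\<lambda>x. \<Sum>k\<in>{1..K}. \<pi> k t0 * (Ek k x $ i * Ek k x $ j * w k t0 x))"
        by (rule Bochner_Integration.integrable_cong[OF refl]) (use pw[of _ "\<lambda>z. z $ i * z $ j"] in simp)
      ultimately show ?thesis by simp
    qed
    have "qf (Emat \<mu> f (\<lambda>x. outer (E x) (E x)) t0) v = (\<integral>x. (v \<bullet> E x)^2 * f x t0 \<partial>\<mu>)"
      by (rule qf_Emat) (use Iij in blast)
    also have "\<dots> = (\<integral>x. (\<Sum>k\<in>{1..K}. \<pi> k t0 * ((v \<bullet> Ek k x)^2 * w k t0 x)) \<partial>\<mu>)"
      by (rule Bochner_Integration.integral_cong[OF refl]) (rule pw)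
    also have "\<dots> = (\<Sum>k\<in>{1..K}. \<pi> k t0 * (\<integral>x. (v \<bullet> Ek k x)^2 * w k t0 x \<partial>\<mu>))"
    proof -
      have "integrable \<mu> (\<lambda>x. (v \<bullet> Ek k x)^2 * w k t0 x)" if k: "k \<in> {1..K}" for k
      proof -
        have "L2 \<mu> (\<lambda>x. f x t0) (\<lambda>x. v \<bullet> Ek k x)" by (rule L2lin) (rule L)
        from L2_prod[OF wm[OF k] wnn L2wf[OF k this] L2wf[OF k this]] show ?thesis
          by (simp add: power2_eq_square)
      qed
      then show ?thesis by (simp add: integral_sum)
    qed
    finally show ?thesis .
  qed


  have sCgen: "sCRB \<mu> f K Lam sel idx th t0 = (\<Sum>k\<in>{k\<in>{1..K}. \<pi> k t0 \<noteq> 0}. \<pi> k t0 *\<^sub>R R k)"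
    unfolding sCRB_def R_def DG_def Let_def b_def A_def \<pi>_def by simp
  have set1: "{k\<in>{1..K}. \<pi> k t0 \<noteq> 0} = {1..K}" using pi_ne by auto
  have qS: "qf (sCRB \<mu> f K Lam sel idx th t0) v = (\<Sum>k\<in>{1..K}. \<pi> k t0 * qf (R k) v)" for v
    unfolding sCgen set1 by (simp add: qf_sum qf_scale)
  have EMe: "qf (Emat \<mu> f (\<lambda>x. outer (zp (sel x) (th x) - zp (sel x) \<theta>) (zp (sel x) (th x) - zp (sel x) \<theta>)) t0) v
      = (\<Sum>k\<in>{1..K}. \<pi> k t0 * (\<integral>x. (v \<bullet> e k x)^2 * w k t0 x \<partial>\<mu>))" for v
    by (rule EM) (simp add: e_def, rule L2e)
  have L2ec: "L2 \<mu> (\<lambda>x. f x t0) (\<lambda>x. (e k x - c k) $ i)" for k i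
  proof -
    have "L2 \<mu> (\<lambda>x. f x t0) (\<lambda>x. e k x $ i - c k $ i)"
      by (rule L2_diff[OF fm]) (simp_all add: fnn L2e L2_const[OF fi])
    then show ?thesis by simp
  qed
  have EMm: "qf (Emat \<mu> f (\<lambda>x. outer (th x - \<theta>) (th x - \<theta>)) t0) v
      = (\<Sum>k\<in>{1..K}. \<pi> k t0 * (\<integral>x. (v \<bullet> (e k x - c k))^2 * w k t0 x \<partial>\<mu>))" for v
  proof (rule EM)
    fix x k assume x: "x \<in> space \<mu>" and k: "k \<in> {1..K}" and sx: "sel x = Lam k"
    show "th x - \<theta> = e k x - c k"
      unfolding e_def c_def zp_def vec_eq_iff using coherent x sx by auto
  next
    fix k i show "L2 \<mu> (\<lambda>x. f x t0) (\<lambda>x. (e k x - c k) $ i)" by (rule L2ec)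
  qed
  have ME: "(\<integral>x. (v \<bullet> (e k x - c k))^2 * w k t0 x \<partial>\<mu>)
      = (\<integral>x. (v \<bullet> e k x)^2 * w k t0 x \<partial>\<mu>) - 2 * (v \<bullet> c k) * (v \<bullet> b k t0) + (v \<bullet> c k) * (v \<bullet> c k)"
    if k: "k \<in> {1..K}" for k v
  proof -
    define vc where "vc = v \<bullet> c k"
    have L2ve: "L2 \<mu> (w k t0) (\<lambda>x. v \<bullet> e k x)" by (rule L2wf[OF k L2lin[OF L2e]])
    have L21: "L2 \<mu> (w k t0) (\<lambda>x. 1)" by (rule L2_const[OF wi[OF k]])
    have Iq: "integrable \<mu> (\<lambda>x. (v \<bullet> e k x) * (v \<bullet> e k x) * w k t0 x)"
      by (rule L2_prod[OF wm[OF k] wnn L2ve L2ve])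
    have Il: "integrable \<mu> (\<lambda>x. (v \<bullet> e k x) * 1 * w k t0 x)"
      by (rule L2_prod[OF wm[OF k] wnn L2ve L21])
    have "(\<integral>x. (v \<bullet> (e k x - c k))^2 * w k t0 x \<partial>\<mu>) = (\<integral>x. (v \<bullet> e k x) * (v \<bullet> e k x) * w k t0 x
            - 2 * vc * ((v \<bullet> e k x) * 1 * w k t0 x) + vc * vc * w k t0 x \<partial>\<mu>)"
      unfolding vc_def by (simp add: inner_diff_right power2_eq_square algebra_simps)
    also have "\<dots> = (\<integral>x. (v \<bullet> e k x) * (v \<bullet> e k x) * w k t0 x \<partial>\<mu>)
            - 2 * vc * (\<integral>x. (v \<bullet> e k x) * 1 * w k t0 x \<partial>\<mu>) + vc * vc * (\<integral>x. w k t0 x \<partial>\<mu>)"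
      using Iq Il wi[OF k] by (simp add: Bochner_Integration.integral_diff Bochner_Integration.integral_add)
    also have "\<dots> = (\<integral>x. (v \<bullet> e k x)^2 * w k t0 x \<partial>\<mu>) - 2 * vc * (v \<bullet> b k t0) + vc * vc"
      using F2[OF k, of v] w1[OF k] by (simp add: power2_eq_square)
    finally show ?thesis unfolding vc_def .
  qed
  have conj1: "psd_ge (Emat \<mu> f (\<lambda>x. outer (zp (sel x) (th x) - zp (sel x) \<theta>)
                                      (zp (sel x) (th x) - zp (sel x) \<theta>)) t0)
                (sCRB \<mu> f K Lam sel idx th t0)"
    unfolding qf_psd
  proof
    fix v
    show "qf (sCRB \<mu> f K Lam sel idx th t0) v \<le> qf (Emat \<mu> f (\<lambda>x. outer (zp (sel x) (th x) - zp (sel x) \<theta>)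
                                      (zp (sel x) (th x) - zp (sel x) \<theta>)) t0) v"
      unfolding qS EMe by (rule sum_mono) (use KEY pi_nn in \<open>auto intro: mult_left_mono\<close>)
  qed
  have conj2: "psd_ge (Emat \<mu> f (\<lambda>x. outer (th x - \<theta>) (th x - \<theta>)) t0)
                (sCRB \<mu> f K Lam sel idx th t0
                 + (\<Sum>k=1..K. \<pi> k t0 *\<^sub>R outer (zp (- Lam k) \<theta>) (zp (- Lam k) \<theta>))
                 - (\<Sum>k=1..K. \<pi> k t0 *\<^sub>R (outer (zp (- Lam k) \<theta>) (b k t0)
                                            + outer (b k t0) (zp (- Lam k) \<theta>))))"
    unfolding qf_psd
  proof
    fix v
    have "qf (sCRB \<mu> f K Lam sel idx th t0
                 + (\<Sum>k=1..K. \<pi> k t0 *\<^sub>R outer (zp (- Lam k) \<theta>) (zp (- Lam k) \<theta>))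
                 - (\<Sum>k=1..K. \<pi> k t0 *\<^sub>R (outer (zp (- Lam k) \<theta>) (b k t0)
                                            + outer (b k t0) (zp (- Lam k) \<theta>)))) v
        = (\<Sum>k\<in>{1..K}. \<pi> k t0 * (qf (R k) v - 2 * (v \<bullet> c k) * (v \<bullet> b k t0) + (v \<bullet> c k) * (v \<bullet> c k)))"
      unfolding qf_diff qf_add qS c_def
      by (simp add: qf_sum qf_scale qf_add qf_outer sum.distrib sum_subtractf sum_distrib_left algebra_simps)
    also have "\<dots> \<le> (\<Sum>k\<in>{1..K}. \<pi> k t0 * ((\<integral>x. (v \<bullet> e k x)^2 * w k t0 x \<partial>\<mu>) - 2 * (v \<bullet> c k) * (v \<bullet> b k t0) + (v \<bullet> c k) * (v \<bullet> c k)))"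
      by (rule sum_mono) (use KEY pi_nn in \<open>auto intro: mult_left_mono\<close>)
    also have "\<dots> = qf (Emat \<mu> f (\<lambda>x. outer (th x - \<theta>) (th x - \<theta>)) t0) v"
      unfolding EMm by (rule sum.cong[OF refl]) (simp add: ME)
    finally show "qf (sCRB \<mu> f K Lam sel idx th t0
                 + (\<Sum>k=1..K. \<pi> k t0 *\<^sub>R outer (zp (- Lam k) \<theta>) (zp (- Lam k) \<theta>))
                 - (\<Sum>k=1..K. \<pi> k t0 *\<^sub>R (outer (zp (- Lam k) \<theta>) (b k t0)
                                            + outer (b k t0) (zp (- Lam k) \<theta>)))) v
        \<le> qf (Emat \<mu> f (\<lambda>x. outer (th x - \<theta>) (th x - \<theta>)) t0) v" .
  qed
  have conj3: "sCRB \<mu> f K Lam sel idx th t0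
              = (\<Sum>k\<in>{k\<in>{1..K}. \<pi> k t0 \<noteq> 0}.
                   \<pi> k t0 *\<^sub>R (Dmat (Lam k) idx ** matrix_inv (sel_FIM \<mu> f (A k) t0)
                                   ** transpose (Dmat (Lam k) idx)))"
    if b0: "\<forall>k\<in>{1..K}. \<forall>s. b k s = 0"
    unfolding sCgen
  proof (rule sum.cong[OF refl])
    fix k assume "k \<in> {k\<in>{1..K}. \<pi> k t0 \<noteq> 0}"
    then have k: "k \<in> {1..K}" by simp
    have bz: "b k = (\<lambda>s. 0)" using b0 k by auto
    have g0: "gradmat (b k) t0 = 0"
      unfolding bz gradmat_def partial_at_def vec_eq_iff by simp
    have o0: "outer (b k t0) (b k t0) = 0"
      unfolding bz outer_def vec_eq_iff by simp
    show "\<pi> k t0 *\<^sub>R R k = \<pi> k t0 *\<^sub>R (Dmat (Lam k) idx ** matrix_inv (sel_FIM \<mu> f (A k) t0)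
                                   ** transpose (Dmat (Lam k) idx))"
      unfolding R_def DG_def g0 o0 by simp
  qed
  show ?thesis using conj1 conj2 conj3 by blast
qed

end
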